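(* Let $K\subset\mathbb{R}^n$ be a closed set, $\alpha>0$, $\gamma:[0,1]\to(K^{\oplus\alpha})^c$ a rectifiable path of length $L(\gamma)$ and $T\ge0$. Then the pushed path $\gamma^{[T]}$ is rectifiable and its length satisfies $$L\big(\gamma^{[T]}\big)\le 2T+L(\gamma)\,e^{T/\alpha}.$$
   Context: $R_K(x)=d(x,K)$; $\Theta_K(x)=\{y\in K:\|x-y\|=R_K(x)\}$; for bounded $S$, $\mathrm{center}(S)$ is the center of the smallest ball enclosing $S$; for $x\notin K$, $\nabla_K(x)=(x-\mathrm{center}(\Theta_K(x)))/R_K(x)$. $\Phi_K:[0,\infty)\times K^c\to K^c$ is the flow of $\nabla_K$: the continuous (locally Lipschitz) semiflow with $\Phi_K(0,x)=x$, $\Phi_K(t_1,\Phi_K(t_2,x))=\Phi_K(t_1+t_2,x)$ and right derivative $\frac{d}{dt^+}\Phi_K(t,x)=\nabla_K(\Phi_K(t,x))$. $K^{\oplus\alpha}=\{x:d(x,K)\le\alpha\}$. For a rectifiable path $\gamma:[0,1]\to K^c$ and $T\ge0$, the pushed path $\gamma^{[T]}:[0,1]\to K^c$ from $\gamma(0)$ to $\gamma(1)$ is defined by $\gamma^{[T]}(t)=\Phi_K(3tT,\gamma(0))$ for $t\in[0,1/3]$, $\gamma^{[T]}(t)=\Phi_K(T,\gamma(3t-1))$ for $t\in[1/3,2/3]$, and $\gamma^{[T]}(t)=\Phi_K(3(1-t)T,\gamma(1))$ for $t\in[2/3,1]$. *)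

theory Defs
  imports "HOL-Analysis.Analysis"
begin

definition distK :: "'a::euclidean_space set \<Rightarrow> 'a \<Rightarrow> real" where
  "distK K x = infdist x K"

definition ThetaK :: "'a::euclidean_space set \<Rightarrow> 'a \<Rightarrow> 'a set" where
  "ThetaK K x = {y \<in> K. dist x y = distK K x}"

definition encl_radius :: "'a::euclidean_space set \<Rightarrow> 'a \<Rightarrow> real" where
  "encl_radius S c = (SUP y\<in>S. dist c y)"

definition center :: "'a::euclidean_space set \<Rightarrow> 'a" where
  "center S = (SOME c. \<forall>c'. encl_radius S c \<le> encl_radius S c')"

definition gradK :: "'a::euclidean_space set \<Rightarrow> 'a \<Rightarrow> 'a" where
  "gradK K x = (1 / distK K x) *\<^sub>R (x - center (ThetaK K x))"

definition offset :: "'a::euclidean_space set \<Rightarrow> real \<Rightarrow> 'a set" where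
  "offset K a = {x. distK K x \<le> a}"

definition is_flowK :: "'a::euclidean_space set \<Rightarrow> (real \<Rightarrow> 'a \<Rightarrow> 'a) \<Rightarrow> bool" where
  "is_flowK K Phi \<longleftrightarrow>
     (\<forall>x. x \<notin> K \<longrightarrow> Phi 0 x = x) \<and>
     (\<forall>t x. t \<ge> 0 \<longrightarrow> x \<notin> K \<longrightarrow> Phi t x \<notin> K) \<and>
     (\<forall>t1 t2 x. t1 \<ge> 0 \<longrightarrow> t2 \<ge> 0 \<longrightarrow> x \<notin> K \<longrightarrow> Phi t1 (Phi t2 x) = Phi (t1 + t2) x) \<and>
     continuous_on ({0..} \<times> (- K)) (\<lambda>(t, x). Phi t x) \<and>
     local_lipschitz {0..} (- K) Phi \<and>
     (\<forall>t x. t \<ge> 0 \<longrightarrow> x \<notin> K \<longrightarrow>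
        ((\<lambda>s. Phi s x) has_vector_derivative gradK K (Phi t x)) (at t within {t..}))"

definition chord_sums :: "(real \<Rightarrow> 'a::euclidean_space) \<Rightarrow> real set" where
  "chord_sums g = {(\<Sum>i<k. dist (g (t i)) (g (t (Suc i)))) | t k.
      t 0 = 0 \<and> t k = 1 \<and> (\<forall>i<k. t i \<le> t (Suc i))}"

definition rectifiable_path :: "(real \<Rightarrow> 'a::euclidean_space) \<Rightarrow> bool" where
  "rectifiable_path g \<longleftrightarrow> path g \<and> bdd_above (chord_sums g)"

definition path_length :: "(real \<Rightarrow> 'a::euclidean_space) \<Rightarrow> real" where
  "path_length g = Sup (chord_sums g)"

definition pushed_path :: "(real \<Rightarrow> 'a \<Rightarrow> 'a) \<Rightarrow> real \<Rightarrow> (real \<Rightarrow> 'a) \<Rightarrow> real \<Rightarrow> 'a" where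
  "pushed_path Phi T g t =
     (if t \<le> 1/3 then Phi (3 * t * T) (g 0)
      else if t \<le> 2/3 then Phi T (g (3 * t - 1))
      else Phi (3 * (1 - t) * T) (g 1))"

end

theory Submission
  imports Defs
begin


lemma right_dini_mono:
  fixes f :: "real \<Rightarrow> real"
  assumes ab: "a \<le> b" and cont: "continuous_on {a..b} f"
    and step: "\<And>s e. s \<in> {a..<b} \<Longrightarrow> e > 0 \<Longrightarrow>
        \<exists>d>0. \<forall>y. s < y \<and> y < s + d \<and> y \<le> b \<longrightarrow> f y \<le> f s + e * (y - s)"
  shows "f b \<le> f a"
proof (rule field_le_epsilon)
  fix e :: real assume e: "e > 0"
  define c where "c = e / (b - a + 1)"
  have c: "c > 0" using e ab by (simp add: c_def)
  define S where "S = {x\<in>{a..b}. \<forall>y\<in>{a..x}. f y \<le> f a + c * (y - a)}"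
  define m where "m = Sup S"
  have aS: "a \<in> S" using ab by (auto simp: S_def)
  have bdd: "bdd_above S" by (auto simp: S_def bdd_above_def)
  have am: "a \<le> m" using aS bdd by (simp add: m_def cSup_upper)
  have mb: "m \<le> b" using aS by (auto simp: m_def S_def intro!: cSup_least)
  define P where "P = {y\<in>{a..b}. f y \<le> f a + c * (y - a)}"
  have Pc: "closed P" unfolding P_def
    by (rule continuous_on_closed_Collect_le[OF cont]) (auto intro!: continuous_intros)
  have lt: "{a..<m} \<subseteq> P"
  proof
    fix y assume y: "y \<in> {a..<m}"
    then obtain x where "x \<in> S" "y < x" using less_cSup_iff[OF _ bdd] aS by (auto simp: m_def)
    then show "y \<in> P" using y by (auto simp: S_def P_def)
  qed
  have mP: "{a..m} \<subseteq> P"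
  proof (cases "a = m")
    case True then show ?thesis using ab by (auto simp: P_def)
  next
    case False
    then have "closure {a..<m} = {a..m}" using am by simp
    then show ?thesis using lt Pc by (metis closure_minimal)
  qed
  have mS: "m \<in> S" using mP mb am by (auto simp: S_def P_def)
  have "m = b"
  proof (rule ccontr)
    assume "m \<noteq> b" then have mb': "m < b" using mb by simp
    obtain d where d: "d > 0" "\<forall>y. m < y \<and> y < m + d \<and> y \<le> b \<longrightarrow> f y \<le> f m + c * (y - m)"
      using step[of m c] mb' am c by auto
    define x where "x = min b (m + d/2)"
    have mx: "m < x" using mb' d by (simp add: x_def)
    have "x \<in> S"
    proof -
      have "f y \<le> f a + c * (y - a)" if y: "y \<in> {a..x}" for y
      proof (cases "y \<le> m")
        case True then show ?thesis using mP y by (auto simp: P_def)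
      next
        case False
        then have "f y \<le> f m + c * (y - m)" using d y by (auto simp: x_def)
        moreover have "f m \<le> f a + c * (m - a)" using mP am by (auto simp: P_def)
        ultimately show ?thesis by (simp add: algebra_simps)
      qed
      then show ?thesis using am mx by (auto simp: S_def x_def)
    qed
    then have "x \<le> m" using bdd by (simp add: m_def cSup_upper)
    then show False using mx by simp
  qed
  then have "f b \<le> f a + c * (b - a)" using mP ab by (auto simp: P_def)
  also have "c * (b - a) \<le> e"
    using e ab by (simp add: c_def field_simps)
  finally show "f b \<le> f a + e" by simp
qed



lemma hull_halfspace_ge:
  fixes S :: "'a::euclidean_space set"
  assumes "\<forall>z\<in>S. inner v z \<ge> b" "y \<in> convex hull S"
  shows "inner v y \<ge> b"
proof -
  have "convex hull S \<subseteq> {x. inner v x \<ge> b}"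
    using assms(1) by (intro hull_minimal) (auto simp: convex_halfspace_ge)
  then show ?thesis using assms(2) by auto
qed

lemma center_eq:
  fixes S :: "'a::euclidean_space set"
  assumes cS: "compact S" and ne: "S \<noteq> {}" and sph: "S \<subseteq> sphere a r"
  shows "center S = closest_point (convex hull S) a"
proof -
  define H where "H = convex hull S"
  have Hc: "closed H" "convex H" "H \<noteq> {}"
    using cS ne by (auto simp: H_def compact_convex_hull compact_imp_closed)
  define p where "p = closest_point H a"
  have pH: "p \<in> H" using Hc by (simp add: p_def closest_point_in_set)
  have pmin: "\<forall>z\<in>H. dist a p \<le> dist a z" using closest_point_exists(2)[OF Hc(1,3)] by (simp add: p_def)
  define w where "w = p - a"
  have za: "norm (z - a) = r" if "z \<in> S" for z
    using sph that by (auto simp: dist_norm norm_minus_commute)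
  have dotS: "inner w (z - a) \<ge> inner w w" if z: "z \<in> S" for z
  proof -
    have "inner (a - p) (z - p) \<le> 0"
      using any_closest_point_dot[OF Hc(2,1) pH _ pmin] z by (auto simp: H_def hull_inc)
    then show ?thesis by (simp add: w_def inner_diff_left inner_diff_right inner_commute algebra_simps)
  qed
  define Q where "Q = r\<^sup>2 - (norm w)\<^sup>2"
  have sq: "(dist c z)\<^sup>2 = r\<^sup>2 - 2 * inner (z - a) (c - a) + (norm (c - a))\<^sup>2" if "z \<in> S" for z c
  proof -
    have "(dist c z)\<^sup>2 = (norm ((z - a) - (c - a)))\<^sup>2" by (simp add: dist_norm norm_minus_commute)
    also have "\<dots> = (norm (z - a))\<^sup>2 - 2 * inner (z - a) (c - a) + (norm (c - a))\<^sup>2"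
      by (simp add: power2_norm_eq_inner inner_diff_left inner_diff_right inner_commute)
    finally show ?thesis using za[OF that] by simp
  qed
  have le1: "(dist p z)\<^sup>2 \<le> Q" if "z \<in> S" for z
    using sq[OF that, of p] dotS[OF that] by (simp add: Q_def w_def power2_norm_eq_inner inner_commute)
  have Q0: "Q \<ge> 0" using le1 ne by (metis all_not_in_conv order_trans zero_le_power2)
  have bdd: "bdd_above (dist c ` S)" for c
  proof -
    have "dist c z \<le> dist c a + r" if "z \<in> S" for z
      using sph that dist_triangle[of c z a] by (auto simp: dist_commute)
    then show ?thesis by (auto simp: bdd_above_def)
  qed
  have erp: "encl_radius S p \<le> sqrt Q"
    unfolding encl_radius_def
  proof (rule cSUP_least[OF ne])
    fix z assume "z \<in> S"
    then show "dist p z \<le> sqrt Q" using le1 by (simp add: real_le_rsqrt)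
  qed
  have erc: "encl_radius S c > sqrt Q" if "c \<noteq> p" for c
  proof -
    define v where "v = c - a"
    have "\<exists>z\<in>S. inner v z \<le> inner v p"
    proof (rule ccontr)
      assume N: "\<not> (\<exists>z\<in>S. inner v z \<le> inner v p)"
      have "\<forall>z\<in>S. inner v z > inner v p" using N by auto
      then have "convex hull S \<subseteq> {x. inner v x > inner v p}"
        by (intro hull_minimal) (auto simp: convex_halfspace_gt)
      then show False using pH by (auto simp: H_def)
    qed
    then obtain z where z: "z \<in> S" "inner v z \<le> inner v p" by auto
    have "inner (z - a) v \<le> inner w v" using z(2) by (simp add: w_def inner_diff_left inner_diff_right inner_commute)
    then have "(dist c z)\<^sup>2 \<ge> Q + (norm (c - p))\<^sup>2"
      using sq[OF z(1), of c]
      by (simp add: Q_def v_def w_def power2_norm_eq_inner inner_diff_left inner_diff_right inner_commute algebra_simps)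
    moreover have "norm (c - p) > 0" using that by simp
    ultimately have "(dist c z)\<^sup>2 > Q" by (smt (verit) zero_less_power)
    then have "dist c z > sqrt Q" using Q0 by (simp add: real_less_lsqrt)
    also have "dist c z \<le> encl_radius S c" unfolding encl_radius_def
      using z(1) bdd by (intro cSUP_upper) auto
    finally show ?thesis .
  qed
  have pmin2: "\<forall>c'. encl_radius S p \<le> encl_radius S c'"
    using erp erc by (metis less_le_not_le order.trans nle_le)
  show ?thesis unfolding center_def
  proof (rule someI2[of _ p])
    show "\<forall>c'. encl_radius S p \<le> encl_radius S c'" by (rule pmin2)
  next
    fix c assume "\<forall>c'. encl_radius S c \<le> encl_radius S c'"
    then have "encl_radius S c \<le> sqrt Q" using erp by (meson order.trans)
    then have "c = p" using erc by (meson not_le)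
    then show "c = closest_point (convex hull S) a" by (simp add: p_def H_def)
  qed
qed



lemma theta_eq: "ThetaK K x = K \<inter> sphere x (distK K x)"
  by (auto simp: ThetaK_def sphere_def)

lemma theta_compact: "closed K \<Longrightarrow> compact (ThetaK K x)"
  by (simp add: theta_eq compact_Int_closed closed_Int_compact)

lemma theta_ne:
  fixes K :: "'a::euclidean_space set"
  shows "closed K \<Longrightarrow> K \<noteq> {} \<Longrightarrow> ThetaK K x \<noteq> {}"
  by (metis (mono_tags, lifting) ThetaK_def distK_def empty_Collect_eq infdist_attains_inf)

lemma distK_pos:
  "closed K \<Longrightarrow> K \<noteq> {} \<Longrightarrow> x \<notin> K \<Longrightarrow> distK K x > 0"
  by (simp add: distK_def infdist_pos_not_in_closed)

lemma center_theta:
  fixes K :: "'a::euclidean_space set" and x :: 'a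
  assumes "closed K" "K \<noteq> {}"
  defines "c \<equiv> center (ThetaK K x)"
  shows "c \<in> convex hull (ThetaK K x)"
    and "\<And>z. z \<in> convex hull (ThetaK K x) \<Longrightarrow> inner (x - c) (z - c) \<le> 0"
proof -
  have ce: "c = closest_point (convex hull (ThetaK K x)) x"
    unfolding c_def
    by (rule center_eq[OF theta_compact[OF assms(1)] theta_ne[OF assms(1,2)]]) (auto simp: theta_eq)
  have H: "closed (convex hull ThetaK K x)" "convex (convex hull ThetaK K x)" "convex hull ThetaK K x \<noteq> {}"
    using theta_compact[OF assms(1)] theta_ne[OF assms(1,2)]
    by (auto simp: compact_convex_hull compact_imp_closed)
  show "c \<in> convex hull (ThetaK K x)" using ce closest_point_in_set[OF H(1,3)] by simp
  fix z assume "z \<in> convex hull (ThetaK K x)"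
  then show "inner (x - c) (z - c) \<le> 0"
    using any_closest_point_dot[OF H(2,1) closest_point_in_set[OF H(1,3)] _ closest_point_exists(2)[OF H(1,3)]] ce
    by simp
qed

lemma hull_theta_cball:
  "convex hull (ThetaK K x) \<subseteq> cball x (distK K x)"
  by (intro hull_minimal) (auto simp: ThetaK_def)

lemma norm_gradK:
  fixes K :: "'a::euclidean_space set"
  assumes "closed K" "K \<noteq> {}" "x \<notin> K"
  shows "norm (gradK K x) \<le> 1"
proof -
  have R: "distK K x > 0" using distK_pos assms by blast
  have "center (ThetaK K x) \<in> cball x (distK K x)"
    using center_theta(1)[OF assms(1,2)] hull_theta_cball by blast
  then have "norm (x - center (ThetaK K x)) \<le> distK K x" by (simp add: dist_norm)
  then show ?thesis using R by (simp add: gradK_def divide_le_eq_1)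
qed

lemma gradK_dir:
  fixes K :: "'a::euclidean_space set"
  assumes "closed K" "K \<noteq> {}" "x \<notin> K" "z \<in> ThetaK K x"
  shows "inner (gradK K x) (x - z) \<ge> 0"
proof -
  define c where "c = center (ThetaK K x)"
  have R: "distK K x > 0" using distK_pos assms by blast
  have "inner (x - c) (z - c) \<le> 0" using center_theta(2)[OF assms(1,2), of z x] assms(4)
    by (simp add: c_def hull_inc)
  then have "inner (x - c) (x - z) \<ge> 0"
  proof -
    have "inner (x - c) (x - z) = inner (x - c) (x - c) - inner (x - c) (z - c)"
      by (simp add: inner_diff_right algebra_simps)
    then show ?thesis using \<open>inner (x - c) (z - c) \<le> 0\<close> inner_ge_zero[of "x - c"] by linarith
  qed
  then show ?thesis using R by (simp add: gradK_def c_def)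
qed

lemma key_ineq:
  fixes K :: "'a::euclidean_space set"
  assumes "closed K" "K \<noteq> {}"
  shows "2 * inner (x - center (ThetaK K x)) (y - x) \<ge> (distK K y)\<^sup>2 - (distK K x)\<^sup>2 - (norm (x - y))\<^sup>2"
proof -
  define C where "C = ((distK K y)\<^sup>2 - (distK K x)\<^sup>2 - (norm (x - y))\<^sup>2) / 2 + inner (x - y) x"
  have "\<forall>z\<in>ThetaK K x. inner (x - y) z \<ge> C"
  proof
    fix z assume z: "z \<in> ThetaK K x"
    have zK: "z \<in> K" and xz: "dist x z = distK K x" using z by (auto simp: ThetaK_def)
    have "distK K y \<le> dist y z" using zK by (simp add: distK_def infdist_le)
    then have "(distK K y)\<^sup>2 \<le> (dist y z)\<^sup>2" by (simp add: distK_def infdist_nonneg power_mono)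
    moreover have "(dist y z)\<^sup>2 = (norm (x - z))\<^sup>2 + 2 * inner (x - z) (y - x) + (norm (y - x))\<^sup>2"
    proof -
      have e: "y - z = (x - z) + (y - x)" by simp
      have "(dist y z)\<^sup>2 = inner ((x - z) + (y - x)) ((x - z) + (y - x))"
        by (metis e dist_norm power2_norm_eq_inner)
      also have "\<dots> = inner (x - z) (x - z) + 2 * inner (x - z) (y - x) + inner (y - x) (y - x)"
        unfolding inner_add_left inner_add_right by (simp add: inner_commute)
      finally show ?thesis by (simp add: power2_norm_eq_inner)
    qed
    moreover have "norm (x - z) = distK K x" using xz by (simp add: dist_norm)
    moreover have "norm (y - x) = norm (x - y)" by (simp add: norm_minus_commute)
    ultimately have "2 * inner (x - z) (y - x) \<ge> (distK K y)\<^sup>2 - (distK K x)\<^sup>2 - (norm (x - y))\<^sup>2"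
      by simp
    moreover have "inner (x - z) (y - x) = inner (x - y) z - inner (x - y) x"
      by (simp add: inner_diff_left inner_diff_right inner_commute algebra_simps)
    ultimately show "inner (x - y) z \<ge> C" unfolding C_def by (simp add: field_simps)
  qed
  then have "inner (x - y) (center (ThetaK K x)) \<ge> C"
    using hull_halfspace_ge center_theta(1)[OF assms] by blast
  moreover have "inner (x - center (ThetaK K x)) (y - x) = inner (x - y) (center (ThetaK K x)) - inner (x - y) x"
    by (simp add: inner_diff_left inner_diff_right inner_commute algebra_simps)
  ultimately show ?thesis unfolding C_def by (simp add: field_simps)
qed

lemma gradK_mono:
  fixes K :: "'a::euclidean_space set"
  assumes "closed K" "K \<noteq> {}" "\<alpha> > 0" "distK K x \<ge> \<alpha>" "distK K y \<ge> \<alpha>"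
  shows "inner (gradK K x - gradK K y) (x - y) \<le> (norm (x - y))\<^sup>2 / \<alpha>"
proof -
  define Rx where "Rx = distK K x"
  define Ry where "Ry = distK K y"
  define d where "d = (norm (x - y))\<^sup>2"
  define A where "A = inner (x - center (ThetaK K x)) (y - x)"
  define B where "B = inner (y - center (ThetaK K y)) (x - y)"
  have hA: "2 * A \<ge> Ry\<^sup>2 - Rx\<^sup>2 - d" using key_ineq[OF assms(1,2), where x=x and y=y] by (simp add: A_def Rx_def Ry_def d_def)
  have hB: "2 * B \<ge> Rx\<^sup>2 - Ry\<^sup>2 - d" using key_ineq[OF assms(1,2), where x=y and y=x]
    by (simp add: B_def Rx_def Ry_def d_def norm_minus_commute)
  have Rx: "Rx \<ge> \<alpha>" and Ry: "Ry \<ge> \<alpha>" using assms by (auto simp: Rx_def Ry_def)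
  have d0: "d \<ge> 0" by (simp add: d_def)
  have eq: "inner (gradK K x - gradK K y) (x - y) = - A / Rx - B / Ry"
  proof -
    have "inner (x - center (ThetaK K x)) (x - y) = - A"
      by (simp add: A_def inner_diff_right algebra_simps)
    then show ?thesis
      by (simp add: gradK_def inner_diff_left B_def Rx_def Ry_def)
  qed
  have e1: "- A / Rx \<le> (Rx\<^sup>2 - Ry\<^sup>2 + d) / (2 * Rx)" using hA Rx assms(3)
    by (simp add: divide_simps)
  have e2: "- B / Ry \<le> (Ry\<^sup>2 - Rx\<^sup>2 + d) / (2 * Ry)" using hB Ry assms(3)
    by (simp add: divide_simps)
  have e3: "(Rx\<^sup>2 - Ry\<^sup>2) / (2 * Rx) + (Ry\<^sup>2 - Rx\<^sup>2) / (2 * Ry) \<le> 0"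
  proof -
    have "(Rx\<^sup>2 - Ry\<^sup>2) / (2 * Rx) + (Ry\<^sup>2 - Rx\<^sup>2) / (2 * Ry) = - (Rx + Ry) * (Rx - Ry)\<^sup>2 / (2 * Rx * Ry)"
      using Rx Ry assms(3) by (simp add: field_simps power2_eq_square)
    also have "\<dots> \<le> 0" using Rx Ry assms(3)
      by (intro divide_nonpos_pos mult_nonpos_nonneg) auto
    finally show ?thesis .
  qed
  have e4: "d / (2 * Rx) \<le> d / (2 * \<alpha>)" "d / (2 * Ry) \<le> d / (2 * \<alpha>)"
    using Rx Ry assms(3) d0 by (auto intro!: divide_left_mono)
  have "(Rx\<^sup>2 - Ry\<^sup>2 + d) / (2 * Rx) + (Ry\<^sup>2 - Rx\<^sup>2 + d) / (2 * Ry)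
      = ((Rx\<^sup>2 - Ry\<^sup>2) / (2 * Rx) + (Ry\<^sup>2 - Rx\<^sup>2) / (2 * Ry)) + d / (2 * Rx) + d / (2 * Ry)"
    by (simp add: add_divide_distrib)
  also have "\<dots> \<le> d / \<alpha>" using e3 e4 by simp
  finally show ?thesis using eq e1 e2 by (simp add: d_def)
qed



lemma der_eps:
  fixes f :: "real \<Rightarrow> 'a::real_normed_vector"
  assumes "(f has_vector_derivative v) (at t within {t..})" "e > 0"
  shows "\<exists>d>0. \<forall>y. t < y \<and> y < t + d \<longrightarrow> norm (f y - f t - (y - t) *\<^sub>R v) \<le> e * (y - t)"
proof -
  from assms(1) have "(f has_derivative (\<lambda>h. h *\<^sub>R v)) (at t within {t..})"
    by (simp add: has_vector_derivative_def)
  then obtain d where d: "d > 0" "\<forall>y\<in>{t..}. norm (y - t) < d \<longrightarrow>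
      norm (f y - f t - (y - t) *\<^sub>R v) \<le> e * norm (y - t)"
    using assms(2) unfolding has_derivative_within_alt by blast
  show ?thesis
  proof (intro exI[of _ d] conjI allI impI)
    fix y assume "t < y \<and> y < t + d"
    then show "norm (f y - f t - (y - t) *\<^sub>R v) \<le> e * (y - t)"
      using d(2)[rule_format, of y] by auto
  qed (use d in auto)
qed

lemma dist_grad_dir:
  fixes K :: "'a::euclidean_space set"
  assumes cl: "closed K" and ne: "K \<noteq> {}" and a: "a \<notin> K" and e: "e > 0"
  shows "\<exists>d>0. \<forall>h. 0 < h \<and> h < d \<longrightarrow> distK K (a + h *\<^sub>R gradK K a) \<ge> distK K a - e * h"
proof -
  define R where "R = distK K a"
  define v where "v = gradK K a"
  have R: "R > 0" using distK_pos[OF cl ne a] by (simp add: R_def)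
  have nv: "norm v \<le> 1" using norm_gradK[OF cl ne a] by (simp add: v_def)
  define C where "C = {z\<in>K. dist a z \<le> R + 1 \<and> inner v (a - z) \<le> - (e * R / 2)}"
  have eta: "\<exists>\<eta>>0. \<eta> \<le> 1 \<and> (\<forall>z\<in>C. dist a z \<ge> R + \<eta>)"
  proof (cases "C = {}")
    case True then show ?thesis by (intro exI[of _ 1]) auto
  next
    case False
    have "C = (cball a (R + 1) \<inter> K) \<inter> {z. inner v z \<ge> inner v a + e * R / 2}"
      by (auto simp: C_def inner_diff_right)
    then have cC: "compact C"
      using cl by (metis compact_Int_closed compact_cball closed_halfspace_ge)
    obtain z0 where z0: "z0 \<in> C" "\<forall>z\<in>C. dist a z0 \<le> dist a z"
      using continuous_attains_inf[OF cC False, of "dist a"] continuous_on_dist[OF continuous_on_const continuous_on_id] by blast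
    have z0K: "z0 \<in> K" and z0v: "inner v (a - z0) \<le> - (e * R / 2)" using z0(1) by (auto simp: C_def)
    have "R \<le> dist a z0" using z0K by (simp add: R_def distK_def infdist_le)
    moreover have "dist a z0 \<noteq> R"
    proof
      assume "dist a z0 = R"
      then have "z0 \<in> ThetaK K a" using z0K by (simp add: ThetaK_def R_def)
      then have "inner v (a - z0) \<ge> 0" unfolding v_def by (rule gradK_dir[OF cl ne a])
      moreover have "e * R > 0" using e R by simp
      ultimately show False using z0v by linarith
    qed
    ultimately have gt: "dist a z0 > R" by simp
    show ?thesis
      by (intro exI[of _ "min 1 (dist a z0 - R)"]) (use gt z0(2) in auto)
  qed
  then obtain \<eta> where eta: "\<eta> > 0" "\<eta> \<le> 1" "\<forall>z\<in>C. dist a z \<ge> R + \<eta>" by blast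
  show ?thesis
  proof (intro exI[of _ "min \<eta> (R / e)"] conjI allI impI)
    show "min \<eta> (R / e) > 0" using eta R e by simp
    fix h assume h: "0 < h \<and> h < min \<eta> (R / e)"
    then have h0: "h > 0" and heta: "h < \<eta>" and hRe: "e * h < R" using e by (auto simp: field_simps)
    show "distK K (a + h *\<^sub>R gradK K a) \<ge> distK K a - e * h"
    proof (rule ccontr)
      assume "\<not> ?thesis"
      then have lt: "distK K (a + h *\<^sub>R v) < R - e * h" by (simp add: R_def v_def)
      obtain z where z: "z \<in> K" "distK K (a + h *\<^sub>R v) = dist (a + h *\<^sub>R v) z"
        using infdist_attains_inf[OF cl ne] unfolding distK_def by metis
      have dz: "dist (a + h *\<^sub>R v) z < R - e * h" using lt z by simp
      have "dist a z \<le> dist (a + h *\<^sub>R v) z + dist a (a + h *\<^sub>R v)" by (metis dist_commute dist_triangle add.commute) 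
      also have "dist a (a + h *\<^sub>R v) = h * norm v" using h0 by (simp add: dist_norm)
      also have "h * norm v \<le> h" using nv h0 by (simp add: mult_left_le)
      finally have "dist a z < R + \<eta>" using dz heta e h0 by (smt (verit) mult_pos_pos)
      then have "z \<notin> C" using eta(3) by force
      moreover have "dist a z \<le> R + 1" using \<open>dist a z < R + \<eta>\<close> eta(2) by simp
      ultimately have phi: "inner v (a - z) > - (e * R / 2)" using z(1) by (auto simp: C_def)
      have Raz: "R \<le> dist a z" using z(1) by (simp add: R_def distK_def infdist_le)
      have ex: "(dist (a + h *\<^sub>R v) z)\<^sup>2 = (dist a z)\<^sup>2 + 2 * h * inner v (a - z) + h\<^sup>2 * inner v v"
      proof -
        have e1: "a + h *\<^sub>R v - z = (a - z) + h *\<^sub>R v" by simp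
        have "(dist (a + h *\<^sub>R v) z)\<^sup>2 = inner ((a - z) + h *\<^sub>R v) ((a - z) + h *\<^sub>R v)"
          by (metis e1 dist_norm power2_norm_eq_inner)
        also have "\<dots> = inner (a - z) (a - z) + 2 * h * inner v (a - z) + h\<^sup>2 * inner v v"
          unfolding inner_add_left inner_add_right by (simp add: inner_commute power2_eq_square)
        finally show ?thesis by (simp add: dist_norm power2_norm_eq_inner)
      qed
      have q1: "(dist a z)\<^sup>2 \<ge> R\<^sup>2" using Raz R by (simp add: power_mono)
      have q2: "h\<^sup>2 * inner v v \<ge> 0" by simp
      have q3: "2 * h * inner v (a - z) > - (h * e * R)" using mult_strict_left_mono[OF phi, of "2 * h"] h0 by (simp add: algebra_simps)
      have big: "(dist (a + h *\<^sub>R v) z)\<^sup>2 > R\<^sup>2 - h * e * R" using ex q1 q2 q3 by linarith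
      have "R - e * h > 0" using hRe by simp
      then have "(dist (a + h *\<^sub>R v) z)\<^sup>2 < (R - e * h)\<^sup>2" using dz by (simp add: power_strict_mono)
      also have "(R - e * h)\<^sup>2 = R\<^sup>2 - 2 * e * h * R + (e * h) * (e * h)" by (simp add: power2_eq_square algebra_simps)
      finally have "e * h * R < (e * h) * (e * h)" using big by (simp add: algebra_simps)
      then have "R < e * h" using e h0 by simp
      then show False using hRe by simp
    qed
  qed
qed



lemma flow_facts:
  assumes "is_flowK K Phi"
  shows "\<And>x. x \<notin> K \<Longrightarrow> Phi 0 x = x"
    and "\<And>t x. t \<ge> 0 \<Longrightarrow> x \<notin> K \<Longrightarrow> Phi t x \<notin> K"
    and "continuous_on ({0..} \<times> (- K)) (\<lambda>(t, x). Phi t x)"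
    and "\<And>t x. t \<ge> 0 \<Longrightarrow> x \<notin> K \<Longrightarrow>
        ((\<lambda>s. Phi s x) has_vector_derivative gradK K (Phi t x)) (at t within {t..})"
  using assms unfolding is_flowK_def by blast+

lemma flow_cont_time:
  assumes "is_flowK K Phi" "x \<notin> K"
  shows "continuous_on {0..} (\<lambda>s. Phi s x)"
proof -
  have "continuous_on {0..} (\<lambda>s. (\<lambda>(t, x). Phi t x) (s, x))"
    by (rule continuous_on_compose2[OF flow_facts(3)[OF assms(1)]])
       (use assms(2) in \<open>auto intro!: continuous_intros\<close>)
  then show ?thesis by simp
qed

lemma flow_speed:
  fixes K :: "'a::euclidean_space set"
  assumes cl: "closed K" and ne: "K \<noteq> {}" and fl: "is_flowK K Phi" and x: "x \<notin> K"
    and st: "0 \<le> s" "s \<le> t"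
  shows "dist (Phi s x) (Phi t x) \<le> t - s"
proof -
  define f where "f r = dist (Phi s x) (Phi r x) - (r - s)" for r
  have "f t \<le> f s"
  proof (rule right_dini_mono[OF st(2)])
    show "continuous_on {s..t} f" unfolding f_def
      using continuous_on_subset[OF flow_cont_time[OF fl x], of "{s..t}"] st
      by (auto intro!: continuous_intros)
  next
    fix r e :: real assume r: "r \<in> {s..<t}" and e: "e > 0"
    have r0: "r \<ge> 0" using r st by auto
    obtain d where d: "d > 0" "\<forall>y. r < y \<and> y < r + d \<longrightarrow>
        norm (Phi y x - Phi r x - (y - r) *\<^sub>R gradK K (Phi r x)) \<le> e * (y - r)"
      using der_eps[OF flow_facts(4)[OF fl r0 x] e] by blast
    have ng: "norm (gradK K (Phi r x)) \<le> 1"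
      using norm_gradK[OF cl ne flow_facts(2)[OF fl r0 x]] .
    show "\<exists>d>0. \<forall>y. r < y \<and> y < r + d \<and> y \<le> t \<longrightarrow> f y \<le> f r + e * (y - r)"
    proof (intro exI[of _ d] conjI allI impI)
      fix y assume y: "r < y \<and> y < r + d \<and> y \<le> t"
      have "norm (Phi y x - Phi r x) \<le> norm ((y - r) *\<^sub>R gradK K (Phi r x)) + e * (y - r)"
        using d(2)[rule_format, of y] y norm_triangle_sub[of "Phi y x - Phi r x" "(y - r) *\<^sub>R gradK K (Phi r x)"]
        by linarith
      also have "norm ((y - r) *\<^sub>R gradK K (Phi r x)) \<le> (y - r)"
        using ng y by (simp add: mult_left_le)
      finally have "dist (Phi r x) (Phi y x) \<le> (y - r) + e * (y - r)"
        by (simp add: dist_norm norm_minus_commute)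
      moreover have "dist (Phi s x) (Phi y x) \<le> dist (Phi s x) (Phi r x) + dist (Phi r x) (Phi y x)"
        by (rule dist_triangle)
      ultimately show "f y \<le> f r + e * (y - r)" unfolding f_def by linarith
    qed (use d in auto)
  qed
  then show ?thesis by (simp add: f_def)
qed

lemma flow_dist_mono:
  fixes K :: "'a::euclidean_space set"
  assumes cl: "closed K" and ne: "K \<noteq> {}" and fl: "is_flowK K Phi" and x: "x \<notin> K"
    and t: "0 \<le> t"
  shows "distK K (Phi t x) \<ge> distK K x"
proof -
  define f where "f r = - distK K (Phi r x)" for r
  have "f t \<le> f 0"
  proof (rule right_dini_mono[OF t])
    show "continuous_on {0..t} f" unfolding f_def distK_def
      using continuous_on_subset[OF flow_cont_time[OF fl x], of "{0..t}"]
      by (auto intro!: continuous_intros)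
  next
    fix r e :: real assume r: "r \<in> {0..<t}" and e: "e > 0"
    have r0: "r \<ge> 0" using r by auto
    define a where "a = Phi r x"
    have aK: "a \<notin> K" using flow_facts(2)[OF fl r0 x] by (simp add: a_def)
    obtain d1 where d1: "d1 > 0" "\<forall>y. r < y \<and> y < r + d1 \<longrightarrow>
        norm (Phi y x - a - (y - r) *\<^sub>R gradK K a) \<le> (e/2) * (y - r)"
      using der_eps[OF flow_facts(4)[OF fl r0 x], of "e/2"] e by (auto simp: a_def)
    obtain d2 where d2: "d2 > 0" "\<forall>h. 0 < h \<and> h < d2 \<longrightarrow>
        distK K (a + h *\<^sub>R gradK K a) \<ge> distK K a - (e/2) * h"
      using dist_grad_dir[OF cl ne aK, of "e/2"] e by auto
    show "\<exists>d>0. \<forall>y. r < y \<and> y < r + d \<and> y \<le> t \<longrightarrow> f y \<le> f r + e * (y - r)"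
    proof (intro exI[of _ "min d1 d2"] conjI allI impI)
      fix y assume y: "r < y \<and> y < r + min d1 d2 \<and> y \<le> t"
      have A: "distK K (a + (y - r) *\<^sub>R gradK K a) \<ge> distK K a - (e/2) * (y - r)"
        using d2(2)[rule_format, of "y - r"] y by auto
      have B: "norm (Phi y x - (a + (y - r) *\<^sub>R gradK K a)) \<le> (e/2) * (y - r)"
      proof -
        have "norm (Phi y x - a - (y - r) *\<^sub>R gradK K a) \<le> (e/2) * (y - r)"
          using d1(2) y by auto
        then show ?thesis by (simp only: diff_diff_eq)
      qed
      have C: "distK K (a + (y - r) *\<^sub>R gradK K a) \<le> distK K (Phi y x) + dist (a + (y - r) *\<^sub>R gradK K a) (Phi y x)"
        unfolding distK_def by (rule infdist_triangle)
      have "dist (a + (y - r) *\<^sub>R gradK K a) (Phi y x) \<le> (e/2) * (y - r)"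
        using B by (simp add: dist_norm norm_minus_commute)
      then show "f y \<le> f r + e * (y - r)" unfolding f_def a_def using A C unfolding a_def by linarith
    qed (use d1 d2 in auto)
  qed
  then show ?thesis using flow_facts(1)[OF fl x] by (simp add: f_def)
qed



lemma gron_step_arith:
  fixes u w E :: "'a::real_inner"
  assumes al: "\<alpha> > 0" and h: "h > 0" and uw: "inner w u \<le> (norm u)\<^sup>2 / \<alpha>" and nw: "norm w \<le> 2"
    and nE: "norm E \<le> 2 * \<epsilon> * h" and eps: "0 \<le> \<epsilon>" "\<epsilon> \<le> 1"
  shows "(norm (u + h *\<^sub>R w + E))\<^sup>2 \<le> (norm u)\<^sup>2 * (1 + 2 * h / \<alpha>) + 4 * \<epsilon> * norm u * h + 16 * h\<^sup>2"
proof -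
  define M where "M = norm (u + h *\<^sub>R w)"
  have M2: "M\<^sup>2 = (norm u)\<^sup>2 + 2 * h * inner w u + h\<^sup>2 * (norm w)\<^sup>2"
    unfolding M_def power2_norm_eq_inner inner_add_left inner_add_right
    by (simp add: inner_commute power2_eq_square algebra_simps)
  have "2 * h * inner w u \<le> 2 * h * ((norm u)\<^sup>2 / \<alpha>)" using mult_left_mono[OF uw, of "2 * h"] h by simp
  moreover have "h\<^sup>2 * (norm w)\<^sup>2 \<le> h\<^sup>2 * 4"
  proof -
    have "(norm w)\<^sup>2 \<le> 2\<^sup>2" using power_mono[OF nw, of 2] by simp
    then show ?thesis by (simp add: mult_left_mono)
  qed
  ultimately have M2b: "M\<^sup>2 \<le> (norm u)\<^sup>2 * (1 + 2 * h / \<alpha>) + 4 * h\<^sup>2"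
    using M2 by (simp add: algebra_simps)
  have Mle: "M \<le> norm u + 2 * h"
  proof -
    have "M \<le> norm u + norm (h *\<^sub>R w)" unfolding M_def by (rule norm_triangle_ineq)
    also have "norm (h *\<^sub>R w) \<le> 2 * h" using nw h by (simp add: mult.commute mult_right_mono)
    finally show ?thesis by simp
  qed
  have M0: "M \<ge> 0" by (simp add: M_def)
  have N: "norm (u + h *\<^sub>R w + E) \<le> M + 2 * \<epsilon> * h"
    using norm_triangle_ineq[of "u + h *\<^sub>R w" E] nE by (simp add: M_def)
  have "(norm (u + h *\<^sub>R w + E))\<^sup>2 \<le> (M + 2 * \<epsilon> * h)\<^sup>2"
    using N by (simp add: power_mono)
  also have "\<dots> = M\<^sup>2 + 4 * \<epsilon> * h * M + 4 * \<epsilon>\<^sup>2 * h\<^sup>2" by (simp add: power2_eq_square algebra_simps)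
  also have "4 * \<epsilon> * h * M \<le> 4 * \<epsilon> * h * (norm u + 2 * h)"
    using Mle eps h by (intro mult_left_mono) auto
  also have "4 * \<epsilon>\<^sup>2 * h\<^sup>2 \<le> 4 * h\<^sup>2"
  proof -
    have "\<epsilon>\<^sup>2 \<le> 1" using eps by (simp add: power_le_one)
    then show ?thesis using mult_right_mono[of "\<epsilon>\<^sup>2" 1 "h\<^sup>2"] by simp
  qed
  finally have "(norm (u + h *\<^sub>R w + E))\<^sup>2 \<le> M\<^sup>2 + 4 * \<epsilon> * h * (norm u + 2 * h) + 4 * h\<^sup>2" by simp
  moreover have "4 * \<epsilon> * h * (2 * h) \<le> 8 * h\<^sup>2"
    using eps h by (simp add: power2_eq_square mult_right_le_one_le)
  ultimately show ?thesis using M2b by (simp add: algebra_simps power2_eq_square)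
qed

lemma flow_lip:
  fixes K :: "'a::euclidean_space set"
  assumes cl: "closed K" and ne: "K \<noteq> {}" and fl: "is_flowK K Phi" and al: "\<alpha> > 0"
    and x: "distK K x \<ge> \<alpha>" and y: "distK K y \<ge> \<alpha>" and t: "0 \<le> t"
  shows "dist (Phi t x) (Phi t y) \<le> exp (t / \<alpha>) * dist x y"
proof -
  have xK: "x \<notin> K" using x al by (auto simp: distK_def)
  have yK: "y \<notin> K" using y al by (auto simp: distK_def)
  define f where "f r = exp (- 2 * r / \<alpha>) * (norm (Phi r x - Phi r y))\<^sup>2" for r
  have "f t \<le> f 0"
  proof (rule right_dini_mono[OF t])
    show "continuous_on {0..t} f" unfolding f_def
      using continuous_on_subset[OF flow_cont_time[OF fl xK], of "{0..t}"]
        continuous_on_subset[OF flow_cont_time[OF fl yK], of "{0..t}"]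
      using al by (auto intro!: continuous_intros)
  next
    fix r e :: real assume r: "r \<in> {0..<t}" and e: "e > 0"
    have r0: "r \<ge> 0" using r by auto
    define a where "a = Phi r x"
    define b where "b = Phi r y"
    have aK: "a \<notin> K" using flow_facts(2)[OF fl r0 xK] by (simp add: a_def)
    have bK: "b \<notin> K" using flow_facts(2)[OF fl r0 yK] by (simp add: b_def)
    have da: "distK K a \<ge> \<alpha>" using flow_dist_mono[OF cl ne fl xK r0] x by (simp add: a_def)
    have db: "distK K b \<ge> \<alpha>" using flow_dist_mono[OF cl ne fl yK r0] y by (simp add: b_def)
    define u where "u = a - b"
    define w where "w = gradK K a - gradK K b"
    have uw: "inner w u \<le> (norm u)\<^sup>2 / \<alpha>"
      using gradK_mono[OF cl ne al da db] by (simp add: u_def w_def)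
    have nw: "norm w \<le> 2"
      using norm_triangle_ineq4[of "gradK K a" "gradK K b"] norm_gradK[OF cl ne aK] norm_gradK[OF cl ne bK]
      by (simp add: w_def)
    define \<epsilon> where "\<epsilon> = min 1 (e / (8 * (norm u + 1)))"
    have pu: "0 < 8 * (norm u + 1)" by (smt (verit) norm_ge_zero)
    have eps: "0 < \<epsilon>" "\<epsilon> \<le> 1" "\<epsilon> \<le> e / (8 * (norm u + 1))"
      using e pu by (auto simp: \<epsilon>_def simp del: distrib_left_numeral)
    obtain d1 where d1: "d1 > 0" "\<forall>y'. r < y' \<and> y' < r + d1 \<longrightarrow>
        norm (Phi y' x - a - (y' - r) *\<^sub>R gradK K a) \<le> \<epsilon> * (y' - r)"
      using der_eps[OF flow_facts(4)[OF fl r0 xK] eps(1)] by (auto simp: a_def)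
    obtain d2 where d2: "d2 > 0" "\<forall>y'. r < y' \<and> y' < r + d2 \<longrightarrow>
        norm (Phi y' y - b - (y' - r) *\<^sub>R gradK K b) \<le> \<epsilon> * (y' - r)"
      using der_eps[OF flow_facts(4)[OF fl r0 yK] eps(1)] by (auto simp: b_def)
    show "\<exists>d>0. \<forall>y'. r < y' \<and> y' < r + d \<and> y' \<le> t \<longrightarrow> f y' \<le> f r + e * (y' - r)"
    proof (intro exI[of _ "min (min d1 d2) (e / 32)"] conjI allI impI)
      fix y' assume y': "r < y' \<and> y' < r + min (min d1 d2) (e / 32) \<and> y' \<le> t"
      define h where "h = y' - r"
      have h: "h > 0" "h < e / 32" using y' by (auto simp: h_def)
      define E1 where "E1 = Phi y' x - a - h *\<^sub>R gradK K a"
      define E2 where "E2 = Phi y' y - b - h *\<^sub>R gradK K b"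
      have nE1: "norm E1 \<le> \<epsilon> * h" using d1(2) y' by (auto simp: E1_def h_def)
      have nE2: "norm E2 \<le> \<epsilon> * h" using d2(2) y' by (auto simp: E2_def h_def)
      have nE: "norm (E1 - E2) \<le> 2 * \<epsilon> * h"
        using norm_triangle_ineq4[of E1 E2] nE1 nE2 by simp
      have Neq: "Phi y' x - Phi y' y = u + h *\<^sub>R w + (E1 - E2)"
        by (simp add: E1_def E2_def u_def w_def algebra_simps)
      have N2: "(norm (Phi y' x - Phi y' y))\<^sup>2 \<le> (norm u)\<^sup>2 * (1 + 2 * h / \<alpha>) + 4 * \<epsilon> * norm u * h + 16 * h\<^sup>2"
        unfolding Neq by (rule gron_step_arith[OF al h(1) uw nw nE]) (use eps in auto)
      have ex1: "exp (- 2 * y' / \<alpha>) * (1 + 2 * h / \<alpha>) \<le> exp (- 2 * r / \<alpha>)"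
      proof -
        have "exp (- 2 * y' / \<alpha>) * (1 + 2 * h / \<alpha>) \<le> exp (- 2 * y' / \<alpha>) * exp (2 * h / \<alpha>)"
          by (intro mult_left_mono exp_ge_add_one_self) simp
        also have "\<dots> = exp (- 2 * y' / \<alpha> + 2 * h / \<alpha>)" by (rule exp_add[symmetric])
        also have "- 2 * y' / \<alpha> + 2 * h / \<alpha> = - 2 * r / \<alpha>"
          using al by (simp add: h_def field_simps)
        finally show ?thesis .
      qed
      have ex2: "exp (- 2 * y' / \<alpha>) \<le> 1" using y' r0 al by simp
      have t1: "4 * \<epsilon> * norm u \<le> e / 2"
      proof -
        have "4 * \<epsilon> * norm u \<le> 4 * (e / (8 * (norm u + 1))) * norm u"
          using eps by (intro mult_right_mono) auto
        also have "\<dots> = (e / 2) * (norm u / (norm u + 1))" using pu by (simp add: field_simps)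
        also have "\<dots> \<le> (e / 2) * 1" using e pu by (intro mult_left_mono) (auto simp: divide_le_eq_1)
        finally show ?thesis by simp
      qed
      have t2: "16 * h\<^sup>2 \<le> e * h / 2" using h by (simp add: power2_eq_square)
      have a1: "(4 * \<epsilon> * norm u) * h \<le> (e / 2) * h" by (rule mult_right_mono[OF t1]) (use h in simp)
      have a2: "(e / 2) * h = e * h / 2" by simp
      have rest0: "4 * \<epsilon> * norm u * h + 16 * h\<^sup>2 \<le> e * h"
        using a1 a2 t2 by linarith
      have rest0': "0 \<le> 4 * \<epsilon> * norm u * h + 16 * h\<^sup>2" using eps h by simp
      have "f y' = exp (- 2 * y' / \<alpha>) * (norm (Phi y' x - Phi y' y))\<^sup>2" by (simp add: f_def)
      also have "\<dots> \<le> exp (- 2 * y' / \<alpha>) * ((norm u)\<^sup>2 * (1 + 2 * h / \<alpha>) + (4 * \<epsilon> * norm u * h + 16 * h\<^sup>2))"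
        using N2 by (intro mult_left_mono) (auto simp: algebra_simps)
      also have "\<dots> = (exp (- 2 * y' / \<alpha>) * (1 + 2 * h / \<alpha>)) * (norm u)\<^sup>2
            + exp (- 2 * y' / \<alpha>) * (4 * \<epsilon> * norm u * h + 16 * h\<^sup>2)" by (simp add: algebra_simps)
      also have "\<dots> \<le> exp (- 2 * r / \<alpha>) * (norm u)\<^sup>2 + 1 * (4 * \<epsilon> * norm u * h + 16 * h\<^sup>2)"
        using ex1 ex2 rest0' by (intro add_mono mult_right_mono) auto
      also have "\<dots> \<le> f r + e * (y' - r)"
        using rest0 by (simp add: f_def u_def a_def b_def h_def)
      finally show "f y' \<le> f r + e * (y' - r)" .
    qed (use d1 d2 e in auto)
  qed
  then have A: "exp (- 2 * t / \<alpha>) * (dist (Phi t x) (Phi t y))\<^sup>2 \<le> (dist x y)\<^sup>2"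
    using flow_facts(1)[OF fl xK] flow_facts(1)[OF fl yK] by (simp add: f_def dist_norm)
  have "(dist (Phi t x) (Phi t y))\<^sup>2 \<le> (exp (t / \<alpha>) * dist x y)\<^sup>2"
  proof -
    have "(exp (t / \<alpha>) * dist x y)\<^sup>2 = exp (2 * t / \<alpha>) * (dist x y)\<^sup>2"
      by (simp add: power_mult_distrib power2_eq_square exp_add[symmetric] add_divide_distrib)
    moreover have "exp (2 * t / \<alpha>) * exp (- 2 * t / \<alpha>) = 1" by (simp add: exp_add[symmetric])
    moreover have "exp (2 * t / \<alpha>) > 0" by simp
    ultimately show ?thesis using A mult_left_mono[OF A, of "exp (2 * t / \<alpha>)"]
      by (simp add: mult.assoc[symmetric])
  qed
  then show ?thesis by (rule power2_le_imp_le) simp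
qed



definition csum_to :: "(real \<Rightarrow> 'a::euclidean_space) \<Rightarrow> real \<Rightarrow> real set" where
  "csum_to g u = {(\<Sum>i<k. dist (g (t i)) (g (t (Suc i)))) | t k.
      t 0 = 0 \<and> t k = u \<and> (\<forall>i<k. t i \<le> t (Suc i))}"

definition lvar :: "(real \<Rightarrow> 'a::euclidean_space) \<Rightarrow> real \<Rightarrow> real" where
  "lvar g u = Sup (csum_to g u)"

lemma csum_to_1: "csum_to g 1 = chord_sums g"
  by (simp add: csum_to_def chord_sums_def)

lemma csum_to_ext:
  assumes "S \<in> csum_to g u" "u \<le> v"
  shows "S + dist (g u) (g v) \<in> csum_to g v"
proof -
  obtain t k where tk: "S = (\<Sum>i<k. dist (g (t i)) (g (t (Suc i))))" "t 0 = 0" "t k = u"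
    "\<forall>i<k. t i \<le> t (Suc i)"
    using assms(1) by (auto simp: csum_to_def)
  define t' where "t' = t(Suc k := v)"
  have s: "(\<Sum>i<Suc k. dist (g (t' i)) (g (t' (Suc i)))) = S + dist (g u) (g v)"
  proof -
    have "(\<Sum>i<k. dist (g (t' i)) (g (t' (Suc i)))) = (\<Sum>i<k. dist (g (t i)) (g (t (Suc i))))"
      by (intro sum.cong) (auto simp: t'_def)
    then show ?thesis using tk by (simp add: t'_def)
  qed
  have P: "t' 0 = 0 \<and> t' (Suc k) = v \<and> (\<forall>i<Suc k. t' i \<le> t' (Suc i))"
    using tk assms(2) by (auto simp: t'_def less_Suc_eq)
  show ?thesis unfolding csum_to_def mem_Collect_eq
    by (rule exI[of _ t'], rule exI[of _ "Suc k"]) (use s P in simp)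
qed

lemma csum_to_single:
  "dist (g 0) (g u) \<in> csum_to g u" if "u \<ge> 0"
proof -
  define t :: "nat \<Rightarrow> real" where "t = (\<lambda>i. if i = 0 then 0 else u)"
  have "(\<Sum>i<Suc 0. dist (g (t i)) (g (t (Suc i)))) = dist (g 0) (g u)" by (simp add: t_def)
  moreover have "t 0 = 0 \<and> t (Suc 0) = u \<and> (\<forall>i<Suc 0. t i \<le> t (Suc i))" using that by (simp add: t_def)
  ultimately show ?thesis unfolding csum_to_def mem_Collect_eq
    by (intro exI[of _ t] exI[of _ "Suc 0"]) simp
qed

lemma lvar_props:
  assumes "bdd_above (chord_sums g)"
  shows "\<And>u v. 0 \<le> u \<Longrightarrow> u \<le> v \<Longrightarrow> v \<le> 1 \<Longrightarrow> lvar g u + dist (g u) (g v) \<le> lvar g v"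
    and "lvar g 0 \<ge> 0" and "lvar g 1 = path_length g"
proof -
  have bdd: "bdd_above (csum_to g u)" if "0 \<le> u" "u \<le> 1" for u
  proof -
    have "S \<le> Sup (chord_sums g)" if "S \<in> csum_to g u" for S
    proof -
      have "S + dist (g u) (g 1) \<in> chord_sums g" using csum_to_ext[OF that \<open>u \<le> 1\<close>] csum_to_1 by metis
      then have "S + dist (g u) (g 1) \<le> Sup (chord_sums g)" using assms by (simp add: cSup_upper)
      then show ?thesis by (smt (verit) zero_le_dist)
    qed
    then show ?thesis by (auto simp: bdd_above_def)
  qed
  show "lvar g u + dist (g u) (g v) \<le> lvar g v" if "0 \<le> u" "u \<le> v" "v \<le> 1" for u v
  proof -
    have ne: "csum_to g u \<noteq> {}" using csum_to_single[of u g] that by auto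
    have "S \<le> lvar g v - dist (g u) (g v)" if S: "S \<in> csum_to g u" for S
    proof -
      have "S + dist (g u) (g v) \<le> lvar g v"
        unfolding lvar_def using csum_to_ext[OF S \<open>u \<le> v\<close>] bdd[of v] \<open>0 \<le> u\<close> \<open>u \<le> v\<close> \<open>v \<le> 1\<close>
        by (intro cSup_upper) auto
      then show ?thesis by simp
    qed
    then have "lvar g u \<le> lvar g v - dist (g u) (g v)" unfolding lvar_def using ne by (intro cSup_least) auto
    then show ?thesis by simp
  qed
  show "lvar g 0 \<ge> 0"
    unfolding lvar_def using csum_to_single[of 0 g] bdd[of 0] by (metis cSup_upper dist_self order_refl zero_le_one)
  show "lvar g 1 = path_length g" by (simp add: lvar_def path_length_def csum_to_1)
qed

lemma chord_bound:
  fixes p :: "real \<Rightarrow> 'a::euclidean_space"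
  assumes "\<And>s t. 0 \<le> s \<Longrightarrow> s \<le> t \<Longrightarrow> t \<le> 1 \<Longrightarrow> dist (p s) (p t) \<le> V t - V s"
  shows "bdd_above (chord_sums p)" and "path_length p \<le> V 1 - V 0"
proof -
  have le: "S \<le> V 1 - V 0" if SS: "S \<in> chord_sums p" for S
  proof -
    obtain t k where tk: "S = (\<Sum>i<k. dist (p (t i)) (p (t (Suc i))))" "t 0 = 0" "t k = 1"
      "\<forall>i<k. t i \<le> t (Suc i)"
      using SS unfolding chord_sums_def by blast
    have up: "\<forall>i. i + j \<le> k \<longrightarrow> t i \<le> t (i + j)" for j
    proof (induction j)
      case 0 then show ?case by simp
    next
      case (Suc j)
      show ?case
      proof (intro allI impI)
        fix i assume "i + Suc j \<le> k"
        then have "t i \<le> t (i + j)" "t (i + j) \<le> t (Suc (i + j))" using Suc tk(4) by auto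
        then show "t i \<le> t (i + Suc j)" by simp
      qed
    qed
    have rng: "0 \<le> t i \<and> t i \<le> 1" if "i \<le> k" for i
      using up[of i] up[of "k - i"] that tk(2,3) by (metis add.commute add_0 le_add_diff_inverse order_refl le_add2)
    have "S \<le> (\<Sum>i<k. V (t (Suc i)) - V (t i))"
      unfolding tk(1) using rng tk(4) by (intro sum_mono assms) auto
    also have "\<dots> = V (t k) - V (t 0)" by (rule sum_lessThan_telescope)
    finally show ?thesis using tk by simp
  qed
  then show "bdd_above (chord_sums p)" by (auto simp: bdd_above_def)
  have ne: "chord_sums p \<noteq> {}"
  proof -
    define t :: "nat \<Rightarrow> real" where "t = (\<lambda>i. if i = 0 then 0 else 1)"
    have "(\<Sum>i<Suc 0. dist (p (t i)) (p (t (Suc i)))) \<in> chord_sums p"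
      unfolding chord_sums_def by (rule CollectI, rule exI[of _ t], rule exI[of _ "Suc 0"]) (simp add: t_def)
    then show ?thesis by auto
  qed
  show "path_length p \<le> V 1 - V 0" unfolding path_length_def using ne le by (intro cSup_least) auto
qed

lemma glue:
  fixes p :: "real \<Rightarrow> 'a::euclidean_space"
  assumes "\<And>s t. a \<le> s \<Longrightarrow> s \<le> t \<Longrightarrow> t \<le> b \<Longrightarrow> dist (p s) (p t) \<le> V t - V s"
    and "\<And>s t. b \<le> s \<Longrightarrow> s \<le> t \<Longrightarrow> t \<le> c \<Longrightarrow> dist (p s) (p t) \<le> V t - V s"
  shows "\<And>s t. a \<le> s \<Longrightarrow> s \<le> t \<Longrightarrow> t \<le> c \<Longrightarrow> dist (p s) (p t) \<le> V t - V s"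
proof -
  fix s t assume st: "a \<le> s" "s \<le> t" "t \<le> c"
  show "dist (p s) (p t) \<le> V t - V s"
  proof (cases "t \<le> b")
    case True then show ?thesis using assms(1) st by auto
  next
    case False
    show ?thesis
    proof (cases "b \<le> s")
      case True then show ?thesis using assms(2) st by auto
    next
      case False
      have "dist (p s) (p t) \<le> dist (p s) (p b) + dist (p b) (p t)" by (rule dist_triangle)
      also have "\<dots> \<le> (V b - V s) + (V t - V b)"
        using assms(1)[of s b] assms(2)[of b t] st False \<open>\<not> t \<le> b\<close> by (intro add_mono) auto
      finally show ?thesis by simp
    qed
  qed
qed



theorem lemma9p9:
  fixes K :: "'a::euclidean_space set"
    and Phi :: "real \<Rightarrow> 'a \<Rightarrow> 'a"
    and g :: "real \<Rightarrow> 'a"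
    and \<alpha> T :: real
  assumes "closed K" and "K \<noteq> {}"
    and "is_flowK K Phi"
    and "\<alpha> > 0"
    and "rectifiable_path g"
    and "path_image g \<subseteq> - offset K \<alpha>"
    and "T \<ge> 0"
  shows "rectifiable_path (pushed_path Phi T g) \<and>
         path_length (pushed_path Phi T g) \<le> 2 * T + path_length g * exp (T / \<alpha>)"
proof -
  note cl = assms(1) and ne = assms(2) and fl = assms(3) and al = assms(4) and T = assms(7)
  have gpath: "path g" and gbdd: "bdd_above (chord_sums g)" using assms(5) by (auto simp: rectifiable_path_def)
  have gcont: "continuous_on {0..1} g" using gpath by (simp add: path_def)
  have gd: "distK K (g u) > \<alpha>" if "u \<in> {0..1}" for u
  proof -
    have "g u \<in> path_image g" using that by (simp add: path_image_def)
    then have "g u \<in> - offset K \<alpha>" using assms(6) by blast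
    then show ?thesis by (simp add: offset_def)
  qed
  have gK: "g u \<notin> K" if "u \<in> {0..1}" for u
    using gd[OF that] al by (auto simp: distK_def)
  have g0K: "g 0 \<notin> K" and g1K: "g 1 \<notin> K" using gK by auto
  define p where "p = pushed_path Phi T g"
  define E where "E = exp (T / \<alpha>)"
  define l where "l = lvar g"
  note lp = lvar_props[OF gbdd]
  define V where "V s = (if s \<le> 1/3 then 3 * s * T
      else if s \<le> 2/3 then T + E * (l (3 * s - 1) - l 0)
      else T + E * (l 1 - l 0) + (3 * s - 2) * T)" for s
  have p1: "p s = Phi (3 * s * T) (g 0)" if "s \<le> 1/3" for s
    using that by (simp add: p_def pushed_path_def)
  have p2: "p s = Phi T (g (3 * s - 1))" if "1/3 \<le> s" "s \<le> 2/3" for s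
    proof (cases "s = 1/3")
    case True show ?thesis unfolding True by (simp add: p_def pushed_path_def)
  next
    case False then show ?thesis using that by (simp add: p_def pushed_path_def)
  qed
  have p3: "p s = Phi (3 * (1 - s) * T) (g 1)" if "2/3 \<le> s" for s
    proof (cases "s = 2/3")
    case True show ?thesis unfolding True by (simp add: p_def pushed_path_def)
  next
    case False then show ?thesis using that by (simp add: p_def pushed_path_def)
  qed
  have V1: "V s = 3 * s * T" if "s \<le> 1/3" for s using that by (simp add: V_def)
  have V2: "V s = T + E * (l (3 * s - 1) - l 0)" if "1/3 \<le> s" "s \<le> 2/3" for s
    proof (cases "s = 1/3")
    case True show ?thesis unfolding True by (simp add: V_def)
  next
    case False then show ?thesis using that by (simp add: V_def)
  qed
  have V3: "V s = T + E * (l 1 - l 0) + (3 * s - 2) * T" if "2/3 \<le> s" for s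
    proof (cases "s = 2/3")
    case True show ?thesis unfolding True by (simp add: V_def)
  next
    case False then show ?thesis using that by (simp add: V_def)
  qed
  have B1: "dist (p s) (p t) \<le> V t - V s" if "0 \<le> s" "s \<le> t" "t \<le> 1/3" for s t
  proof -
    have "dist (Phi (3 * s * T) (g 0)) (Phi (3 * t * T) (g 0)) \<le> 3 * t * T - 3 * s * T"
      using that T by (intro flow_speed[OF cl ne fl g0K]) (auto intro: mult_right_mono)
    then show ?thesis using that by (simp add: p1 V1)
  qed
  have B2: "dist (p s) (p t) \<le> V t - V s" if "1/3 \<le> s" "s \<le> t" "t \<le> 2/3" for s t
  proof -
    have u: "3 * s - 1 \<in> {0..1}" "3 * t - 1 \<in> {0..1}" using that by auto
    have "dist (Phi T (g (3 * s - 1))) (Phi T (g (3 * t - 1))) \<le> E * dist (g (3 * s - 1)) (g (3 * t - 1))"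
      unfolding E_def using gd[OF u(1)] gd[OF u(2)] T
      by (intro flow_lip[OF cl ne fl al]) auto
    also have "\<dots> \<le> E * (l (3 * t - 1) - l (3 * s - 1))"
      using lp(1)[of "3 * s - 1" "3 * t - 1"] that unfolding l_def E_def
      by (intro mult_left_mono) auto
    finally show ?thesis using that by (simp add: p2 V2 algebra_simps)
  qed
  have B3: "dist (p s) (p t) \<le> V t - V s" if "2/3 \<le> s" "s \<le> t" "t \<le> 1" for s t
  proof -
    have "dist (Phi (3 * (1 - t) * T) (g 1)) (Phi (3 * (1 - s) * T) (g 1)) \<le> 3 * (1 - s) * T - 3 * (1 - t) * T"
      using that T by (intro flow_speed[OF cl ne fl g1K]) (auto intro: mult_right_mono)
    then show ?thesis using that by (simp add: p3 V3 dist_commute algebra_simps)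
  qed
  have Ball: "dist (p s) (p t) \<le> V t - V s" if "0 \<le> s" "s \<le> t" "t \<le> 1" for s t
  proof -
    have B12: "dist (p s) (p t) \<le> V t - V s" if "0 \<le> s" "s \<le> t" "t \<le> 2/3" for s t
      using glue[where a=0 and b="1/3" and c="2/3" and p=p and V=V, OF B1 B2] that by blast
    show ?thesis
      using glue[where a=0 and b="2/3" and c=1 and p=p and V=V, OF B12 B3] that by blast
  qed
  have cont: "continuous_on {0..1} p"
  proof -
    define A where "A t = Phi (3 * t * T) (g 0)" for t
    define B where "B t = Phi T (g (3 * t - 1))" for t
    define C where "C t = Phi (3 * (1 - t) * T) (g 1)" for t
    have peq: "p = (\<lambda>t. if t \<le> 1/3 then A t else (\<lambda>t. if t \<le> 2/3 then B t else C t) t)"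
      by (rule ext) (simp add: p_def pushed_path_def A_def B_def C_def)
    have cA: "continuous_on {x \<in> {0..1}. x \<le> 1/3} A"
      unfolding A_def
      by (rule continuous_on_compose2[OF flow_cont_time[OF fl g0K], of _ "\<lambda>t. 3 * t * T"])
         (use T in \<open>auto intro!: continuous_intros\<close>)
    have cC: "continuous_on {x \<in> {x \<in> {0..1}. 1/3 \<le> x}. 2/3 \<le> x} C"
      unfolding C_def
      by (rule continuous_on_compose2[OF flow_cont_time[OF fl g1K], of _ "\<lambda>t. 3 * (1 - t) * T"])
         (use T in \<open>auto intro!: continuous_intros\<close>)
    have cB: "continuous_on {x \<in> {x \<in> {0..1}. 1/3 \<le> x}. x \<le> 2/3} B"
    proof -
      have cg: "continuous_on {x \<in> {x \<in> {0..1}. 1/3 \<le> x}. x \<le> 2/3} (\<lambda>t. g (3 * t - 1))"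
        by (rule continuous_on_compose2[OF gcont, of _ "\<lambda>t. 3 * t - 1"]) (auto intro!: continuous_intros)
      have "continuous_on {x \<in> {x \<in> {0..1}. 1/3 \<le> x}. x \<le> 2/3} (\<lambda>t. (\<lambda>(t, x). Phi t x) (T, g (3 * t - 1)))"
        by (rule continuous_on_compose2[OF flow_facts(3)[OF fl]])
           (use cg T gK in \<open>auto intro!: continuous_intros\<close>)
      then show ?thesis by (simp add: B_def)
    qed
    have cBC: "continuous_on {x \<in> {0..1}. 1/3 \<le> x} (\<lambda>t. if t \<le> 2/3 then B t else C t)"
    proof (rule continuous_on_cases_le[OF cB cC])
      show "continuous_on {x \<in> {0..1}. 1 / 3 \<le> x} (\<lambda>x. x)" by (rule continuous_on_id)
      have hB: "B (2/3) = C (2/3)" by (simp add: B_def C_def)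
      fix x :: real assume "x \<in> {x \<in> {0..1}. 1 / 3 \<le> x}" "x = 2/3"
      show "B x = C x" unfolding \<open>x = 2/3\<close> by (rule hB)
    qed
    show ?thesis unfolding peq
    proof (rule continuous_on_cases_le[OF cA cBC])
      show "continuous_on {0..1} (\<lambda>x. x)" by (rule continuous_on_id)
      have hA: "A (1/3) = B (1/3)" by (simp add: A_def B_def)
      fix x assume "x \<in> {0..1::real}" "x = 1/3"
      have "A x = B x" unfolding \<open>x = 1/3\<close> by (rule hA)
      moreover have "x \<le> 2/3" using \<open>x = 1/3\<close> by linarith
      ultimately show "A x = (if x \<le> 2/3 then B x else C x)" by simp
    qed
  qed
  have cb: "bdd_above (chord_sums p)" and pl: "path_length p \<le> V 1 - V 0"
    using chord_bound[of p V] Ball by auto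
  have "V 1 - V 0 = 2 * T + E * (l 1 - l 0)" by (simp add: V_def algebra_simps)
  also have "\<dots> \<le> 2 * T + path_length g * E"
    using lp(2,3) unfolding l_def E_def by (simp add: algebra_simps)
  finally show ?thesis using pl cb cont
    by (auto simp: rectifiable_path_def path_def p_def E_def)
qed

end
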